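(* Let $S$ be a set. A set of $S$-probabilities is $\vee$-specific if and only if it is both specific and weakly structured; i.e. $\mathcal C_2=\mathcal C_1\cap\mathcal C_4$.
   Context: An $S$-probability is a function $p\colon S\to[0,1]$; sets $P$ of them are ordered pointwise, $0,1$ are constant functions, $p':=1-p$, sums are pointwise; $p\vee q$ denotes the supremum in $P$. $p\wedge q=0$ means the only $x\in P$ with $x\le p,q$ is $x=0$; $p\perp q$ means $p\le 1-q$. Conditions: (1) $0,1\in P$; (2) $p\in P\Rightarrow 1-p\in P$; (3) $p,q\in P$, $p\wedge q=0\Rightarrow p+q\in P$; (6) $p,q\in P$, $p\wedge q=0\Rightarrow p+q\in P$ and $p+q=p\vee q$ in $P$; (8) $p,q,r\in P$, $p\perp q$, $q\perp r$, $p\wedge r=0\Rightarrow p+q+r\le 1$. $\mathcal C_1$: specific sets ((1),(2),(3)); $\mathcal C_2$: $\vee$-specific sets (specific sets satisfying (6)); $\mathcal C_4$: weakly structured sets ((1),(2),(8)). *)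

theory Defs
  imports Main "HOL.Real"
begin

text \<open>The set S is modelled as a type 's; an S-probability is a function 's \<Rightarrow> real
  with values in [0,1]. Functions are ordered pointwise (Isabelle's standard order on functions).\<close>

definition sprob :: "('s \<Rightarrow> real) \<Rightarrow> bool" where
  "sprob p \<longleftrightarrow> (\<forall>s. 0 \<le> p s \<and> p s \<le> 1)"

definition zerof :: "'s \<Rightarrow> real" where "zerof = (\<lambda>_. 0)"
definition onef :: "'s \<Rightarrow> real" where "onef = (\<lambda>_. 1)"
definition compl_p :: "('s \<Rightarrow> real) \<Rightarrow> ('s \<Rightarrow> real)" where "compl_p p = (\<lambda>s. 1 - p s)"
definition add_p :: "('s \<Rightarrow> real) \<Rightarrow> ('s \<Rightarrow> real) \<Rightarrow> ('s \<Rightarrow> real)" where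
  "add_p p q = (\<lambda>s. p s + q s)"

text \<open>p \<and> q = 0 in P: the only x in P below both p and q is 0.\<close>
definition meet_zero :: "('s \<Rightarrow> real) set \<Rightarrow> ('s \<Rightarrow> real) \<Rightarrow> ('s \<Rightarrow> real) \<Rightarrow> bool" where
  "meet_zero P p q \<longleftrightarrow> (\<forall>x\<in>P. x \<le> p \<and> x \<le> q \<longrightarrow> x = zerof)"

definition orth :: "('s \<Rightarrow> real) \<Rightarrow> ('s \<Rightarrow> real) \<Rightarrow> bool" where
  "orth p q \<longleftrightarrow> p \<le> compl_p q"

definition is_sup_in :: "('s \<Rightarrow> real) set \<Rightarrow> ('s \<Rightarrow> real) \<Rightarrow> ('s \<Rightarrow> real) \<Rightarrow> ('s \<Rightarrow> real) \<Rightarrow> bool" where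
  "is_sup_in P p q r \<longleftrightarrow> r \<in> P \<and> p \<le> r \<and> q \<le> r \<and> (\<forall>x\<in>P. p \<le> x \<and> q \<le> x \<longrightarrow> r \<le> x)"

definition cond1 :: "('s \<Rightarrow> real) set \<Rightarrow> bool" where
  "cond1 P \<longleftrightarrow> zerof \<in> P \<and> onef \<in> P"
definition cond2 :: "('s \<Rightarrow> real) set \<Rightarrow> bool" where
  "cond2 P \<longleftrightarrow> (\<forall>p\<in>P. compl_p p \<in> P)"
definition cond3 :: "('s \<Rightarrow> real) set \<Rightarrow> bool" where
  "cond3 P \<longleftrightarrow> (\<forall>p\<in>P. \<forall>q\<in>P. meet_zero P p q \<longrightarrow> add_p p q \<in> P)"
definition cond6 :: "('s \<Rightarrow> real) set \<Rightarrow> bool" where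
  "cond6 P \<longleftrightarrow> (\<forall>p\<in>P. \<forall>q\<in>P. meet_zero P p q \<longrightarrow> add_p p q \<in> P \<and> is_sup_in P p q (add_p p q))"
definition cond8 :: "('s \<Rightarrow> real) set \<Rightarrow> bool" where
  "cond8 P \<longleftrightarrow> (\<forall>p\<in>P. \<forall>q\<in>P. \<forall>r\<in>P. orth p q \<and> orth q r \<and> meet_zero P p r
      \<longrightarrow> add_p (add_p p q) r \<le> onef)"

definition specific :: "('s \<Rightarrow> real) set \<Rightarrow> bool" where
  "specific P \<longleftrightarrow> (\<forall>p\<in>P. sprob p) \<and> cond1 P \<and> cond2 P \<and> cond3 P"
definition vee_specific :: "('s \<Rightarrow> real) set \<Rightarrow> bool" where
  "vee_specific P \<longleftrightarrow> specific P \<and> cond6 P"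
definition weakly_structured :: "('s \<Rightarrow> real) set \<Rightarrow> bool" where
  "weakly_structured P \<longleftrightarrow> (\<forall>p\<in>P. sprob p) \<and> cond1 P \<and> cond2 P \<and> cond8 P"

end

theory Submission
  imports Defs
begin

lemma dir1:
  assumes "vee_specific P" shows "cond8 P"
  unfolding cond8_def
proof (intro ballI impI)
  fix p q r assume pP: "p \<in> P" and qP: "q \<in> P" and rP: "r \<in> P"
    and h: "orth p q \<and> orth q r \<and> meet_zero P p r"
  have c6: "cond6 P" and c2: "cond2 P" using assms by (auto simp: vee_specific_def specific_def)
  have sup: "is_sup_in P p r (add_p p r)" using c6 pP rP h by (auto simp: cond6_def)
  have cq: "compl_p q \<in> P" using c2 qP by (auto simp: cond2_def)
  have "p \<le> compl_p q" using h by (simp add: orth_def)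
  moreover have "r \<le> compl_p q" unfolding le_fun_def compl_p_def
  proof
    fix s have "q s \<le> 1 - r s" using h by (simp add: orth_def compl_p_def le_fun_def)
    then show "r s \<le> 1 - q s" by simp
  qed
  ultimately have "add_p p r \<le> compl_p q" using sup cq by (auto simp: is_sup_in_def)
  then show "add_p (add_p p q) r \<le> onef"
    unfolding le_fun_def
  proof (intro allI)
    fix s assume "\<forall>s. add_p p r s \<le> compl_p q s"
    then have "add_p p r s \<le> compl_p q s" by blast
    then show "add_p (add_p p q) r s \<le> onef s" by (simp add: add_p_def compl_p_def onef_def)
  qed
qed

lemma dir2:
  assumes "specific P" "weakly_structured P" shows "cond6 P"
  unfolding cond6_def
proof (intro ballI impI)
  fix p q assume pP: "p \<in> P" and qP: "q \<in> P" and m: "meet_zero P p q"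
  have c3: "cond3 P" and c2: "cond2 P" and sp: "\<forall>p\<in>P. sprob p"
    using assms(1) by (auto simp: specific_def)
  have c8: "cond8 P" using assms(2) by (auto simp: weakly_structured_def)
  have inP: "add_p p q \<in> P" using c3 pP qP m by (auto simp: cond3_def)
  have "p \<le> add_p p q" "q \<le> add_p p q" using sp pP qP
    by (auto simp: sprob_def add_p_def le_fun_def)
  moreover have "add_p p q \<le> x" if xP: "x \<in> P" and px: "p \<le> x" and qx: "q \<le> x" for x
  proof -
    have cx: "compl_p x \<in> P" using c2 xP by (auto simp: cond2_def)
    have "orth p (compl_p x)" using px by (auto simp: orth_def compl_p_def le_fun_def)
    moreover have "orth (compl_p x) q" using qx by (auto simp: orth_def compl_p_def le_fun_def)
    ultimately have "add_p (add_p p (compl_p x)) q \<le> onef"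
      using c8 pP qP cx m by (auto simp: cond8_def)
    then show ?thesis unfolding le_fun_def
    proof (intro allI)
      fix s assume "\<forall>s. add_p (add_p p (compl_p x)) q s \<le> onef s"
      then have "add_p (add_p p (compl_p x)) q s \<le> onef s" by blast
      then show "add_p p q s \<le> x s" by (simp add: add_p_def compl_p_def onef_def)
    qed
  qed
  ultimately show "add_p p q \<in> P \<and> is_sup_in P p q (add_p p q)"
    using inP by (auto simp: is_sup_in_def)
qed

theorem lemma3p2:
  fixes P :: "('s \<Rightarrow> real) set"
  shows "vee_specific P \<longleftrightarrow> specific P \<and> weakly_structured P"
  using dir1[of P] dir2[of P]
  by (auto simp: vee_specific_def weakly_structured_def specific_def)

end
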